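(* Let $h$ be a positive integer and $L$ an $h$-modular lattice with zero. Let $x$ be a map from $\mathrm{J}(K)$ to $L$ with finite range. Then $x\in\mathcal{A}^*$ if and only if $x$ extends to a homomorphism from $\langle K^-,\vee\rangle$ to $\langle L,\wedge\rangle$, where $K^-=K\setminus\{0_K\}$. Furthermore, such an extension is unique.
   Context: $K$ is the lattice consisting of $\varnothing$ (its zero $0_K$), $C=\{c\}$, $A_m=\{a_k:k\geq m\}$, $B_n=\{b_k:k\geq n\}$ ($m,n<\omega$), and $C\cup A_m\cup B_n$ with $|m-n|\leq1$, ordered by inclusion; $a_n,b_n,c$ denote $A_n,B_n,C$, so $\mathrm{J}(K)=\{c\}\cup\{a_n\}\cup\{b_n\}$. $\mathcal{A}$ is the set of antitone maps $x\colon\mathrm{J}(K)\to L$ ($p\leq q\Rightarrow x(p)\geq x(q)$) with finite range. For $x\in\mathcal{A}$, $x(a_\infty)$, $x(b_\infty)$ are the eventual values of the increasing sequences $(x(a_n))$, $(x(b_n))$. The map $x^{(1)}$ is defined by $x^{(1)}(c)=x(c)\vee(x(a_\infty)\wedge x(b_\infty))$, $x^{(1)}(a_0)=x(a_0)$, $x^{(1)}(b_0)=x(b_0)$, $x^{(1)}(a_{n+1})=x(a_{n+1})\vee(x(b_n)\wedge x(c))$, $x^{(1)}(b_{n+1})=x(b_{n+1})\vee(x(a_n)\wedge x(c))$ for $n<\omega$. $\mathcal{A}^*=\{x\in\mathcal{A}:x^{(1)}=x\}$. $L$ is $h$-modular if $u^{(h+1)}=u^{(h)}$ for all $u\in L^3$,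 where $\langle x,y,z\rangle^{(1)}=\langle x\vee(y\wedge z),y\vee(x\wedge z),z\vee(x\wedge y)\rangle$ and $u^{(k+1)}=(u^{(k)})^{(1)}$. *)

theory Defs
  imports Main
begin

text \<open>Points of the underlying set of the lattice K: c, a_k, b_k.\<close>
datatype pt = PC | PA nat | PB nat

definition Cset :: "pt set" where "Cset = {PC}"
definition Aset :: "nat \<Rightarrow> pt set" where "Aset m = {PA k | k. m \<le> k}"
definition Bset :: "nat \<Rightarrow> pt set" where "Bset n = {PB k | k. n \<le> k}"

definition Klat :: "pt set set" where
  "Klat = {{}, Cset} \<union> range Aset \<union> range Bset
     \<union> {Cset \<union> Aset m \<union> Bset n | m n. m \<le> n + 1 \<and> n \<le> m + 1}"

definition Kminus :: "pt set set" where "Kminus = Klat - {{}}"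
definition JK :: "pt set set" where "JK = {Cset} \<union> range Aset \<union> range Bset"

definition Kjoin :: "pt set \<Rightarrow> pt set \<Rightarrow> pt set" where
  "Kjoin p q = (THE r. r \<in> Klat \<and> p \<union> q \<subseteq> r \<and> (\<forall>s\<in>Klat. p \<union> q \<subseteq> s \<longrightarrow> r \<subseteq> s))"

text \<open>The set \<A>: antitone maps J(K) -> L with finite range (maps considered on JK only).\<close>
definition inA :: "(pt set \<Rightarrow> 'a::order) \<Rightarrow> bool" where
  "inA x \<longleftrightarrow> (\<forall>p\<in>JK. \<forall>q\<in>JK. p \<subseteq> q \<longrightarrow> x q \<le> x p) \<and> finite (x ` JK)"

definition eventual :: "(nat \<Rightarrow> 'a) \<Rightarrow> 'a" where
  "eventual f = (THE v. \<exists>N. \<forall>n\<ge>N. f n = v)"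

definition xainf :: "(pt set \<Rightarrow> 'a) \<Rightarrow> 'a" where
  "xainf x = eventual (\<lambda>n. x (Aset n))"
definition xbinf :: "(pt set \<Rightarrow> 'a) \<Rightarrow> 'a" where
  "xbinf x = eventual (\<lambda>n. x (Bset n))"

definition x1_c :: "(pt set \<Rightarrow> 'a::lattice) \<Rightarrow> 'a" where
  "x1_c x = sup (x Cset) (inf (xainf x) (xbinf x))"
definition x1_a :: "(pt set \<Rightarrow> 'a::lattice) \<Rightarrow> nat \<Rightarrow> 'a" where
  "x1_a x n = (case n of 0 \<Rightarrow> x (Aset 0)
                 | Suc m \<Rightarrow> sup (x (Aset (Suc m))) (inf (x (Bset m)) (x Cset)))"
definition x1_b :: "(pt set \<Rightarrow> 'a::lattice) \<Rightarrow> nat \<Rightarrow> 'a" where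
  "x1_b x n = (case n of 0 \<Rightarrow> x (Bset 0)
                 | Suc m \<Rightarrow> sup (x (Bset (Suc m))) (inf (x (Aset m)) (x Cset)))"

definition inAstar :: "(pt set \<Rightarrow> 'a::lattice) \<Rightarrow> bool" where
  "inAstar x \<longleftrightarrow> inA x \<and> x1_c x = x Cset
     \<and> (\<forall>n. x1_a x n = x (Aset n)) \<and> (\<forall>n. x1_b x n = x (Bset n))"

definition tri_step :: "'a::lattice \<times> 'a \<times> 'a \<Rightarrow> 'a \<times> 'a \<times> 'a" where
  "tri_step u = (case u of (x, y, z) \<Rightarrow>
      (sup x (inf y z), sup y (inf x z), sup z (inf x y)))"

definition h_modular :: "nat \<Rightarrow> 'a::lattice itself \<Rightarrow> bool" where
  "h_modular h _ \<longleftrightarrow> (\<forall>u :: 'a \<times> 'a \<times> 'a. (tri_step ^^ (h + 1)) u = (tri_step ^^ h) u)"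

definition hom_ext :: "(pt set \<Rightarrow> 'a::lattice) \<Rightarrow> (pt set \<Rightarrow> 'a) \<Rightarrow> bool" where
  "hom_ext x f \<longleftrightarrow> (\<forall>p\<in>Kminus. \<forall>q\<in>Kminus. f (Kjoin p q) = inf (f p) (f q))
      \<and> (\<forall>p\<in>JK. f p = x p)"

end

theory Submission
  imports Defs
begin

definition CAB :: "nat \<Rightarrow> nat \<Rightarrow> pt set" where "CAB m n = Cset \<union> Aset m \<union> Bset n"

lemma mem_simps[simp]:
  "PC \<in> Cset" "PA k \<notin> Cset" "PB k \<notin> Cset"
  "PC \<notin> Aset m" "(PA k \<in> Aset m) = (m \<le> k)" "PB k \<notin> Aset m"
  "PC \<notin> Bset m" "(PB k \<in> Bset m) = (m \<le> k)" "PA k \<notin> Bset m"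
  "PC \<in> CAB m n" "(PA k \<in> CAB m n) = (m \<le> k)" "(PB k \<in> CAB m n) = (n \<le> k)"
  by (auto simp: Cset_def Aset_def Bset_def CAB_def)

lemma sub_simps:
  "Cset \<subseteq> X \<longleftrightarrow> PC \<in> X"
  "Aset m \<subseteq> X \<longleftrightarrow> (\<forall>k\<ge>m. PA k \<in> X)"
  "Bset m \<subseteq> X \<longleftrightarrow> (\<forall>k\<ge>m. PB k \<in> X)"
  "CAB m n \<subseteq> X \<longleftrightarrow> PC \<in> X \<and> (\<forall>k\<ge>m. PA k \<in> X) \<and> (\<forall>k\<ge>n. PB k \<in> X)"
  by (auto simp: Cset_def Aset_def Bset_def CAB_def)

lemma sub2[simp]:
  "Cset \<subseteq> Cset" "\<not> Cset \<subseteq> Aset m" "\<not> Cset \<subseteq> Bset m" "Cset \<subseteq> CAB m n" "\<not> Cset \<subseteq> {}"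
  "\<not> Aset k \<subseteq> Cset" "(Aset k \<subseteq> Aset m) = (m \<le> k)" "\<not> Aset k \<subseteq> Bset m" "(Aset k \<subseteq> CAB m n) = (m \<le> k)" "\<not> Aset k \<subseteq> {}"
  "\<not> Bset k \<subseteq> Cset" "(Bset k \<subseteq> Bset m) = (m \<le> k)" "\<not> Bset k \<subseteq> Aset m" "(Bset k \<subseteq> CAB m n) = (n \<le> k)" "\<not> Bset k \<subseteq> {}"
  "\<not> CAB k l \<subseteq> Cset" "\<not> CAB k l \<subseteq> Aset m" "\<not> CAB k l \<subseteq> Bset m" "(CAB k l \<subseteq> CAB m n) = (m \<le> k \<and> n \<le> l)" "\<not> CAB k l \<subseteq> {}"
  unfolding sub_simps by (auto dest: spec[of _ k] spec[of _ l] spec[of _ m] spec[of _ n] simp: le_trans)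

lemma ne_simps[simp]:
  "Cset \<noteq> {}" "Aset m \<noteq> {}" "Bset m \<noteq> {}" "CAB m n \<noteq> {}"
  "Cset \<noteq> Aset m" "Cset \<noteq> Bset m" "Cset \<noteq> CAB m n"
  "Aset m \<noteq> Cset" "Bset m \<noteq> Cset" "CAB m n \<noteq> Cset"
  "Aset m \<noteq> Bset k" "Bset k \<noteq> Aset m"
  "Aset m \<noteq> CAB k l" "CAB k l \<noteq> Aset m"
  "Bset m \<noteq> CAB k l" "CAB k l \<noteq> Bset m"
  by (metis mem_simps order_refl empty_iff)+

lemma eq_simps[simp]:
  "(Aset m = Aset k) = (m = k)" "(Bset m = Bset k) = (m = k)"
  "(CAB m n = CAB k l) = (m = k \<and> n = l)"
  by (metis mem_simps order_refl le_antisym)+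

lemma Klat_cases:
  assumes "s \<in> Klat"
  shows "s = {} \<or> s = Cset \<or> (\<exists>m. s = Aset m) \<or> (\<exists>n. s = Bset n) \<or> (\<exists>m n. s = CAB m n \<and> m \<le> n+1 \<and> n \<le> m+1)"
  using assms unfolding Klat_def CAB_def by blast

lemma Klat_intros: "Cset \<in> Klat" "Aset m \<in> Klat" "Bset m \<in> Klat" 
  "m \<le> n+1 \<Longrightarrow> n \<le> m+1 \<Longrightarrow> CAB m n \<in> Klat"
  unfolding Klat_def CAB_def by blast+

lemma Kminus_cases:
  assumes "s \<in> Kminus"
  shows "s = Cset \<or> (\<exists>m. s = Aset m) \<or> (\<exists>n. s = Bset n) \<or> (\<exists>m n. s = CAB m n \<and> m \<le> n+1 \<and> n \<le> m+1)"
  using assms Klat_cases unfolding Kminus_def by blast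

lemma JK_cases: "p \<in> JK \<longleftrightarrow> p = Cset \<or> (\<exists>m. p = Aset m) \<or> (\<exists>n. p = Bset n)"
  unfolding JK_def by blast

lemma Kjoin_eq:
  assumes "r \<in> Klat" "p \<union> q \<subseteq> r" "\<And>s. s \<in> Klat \<Longrightarrow> p \<union> q \<subseteq> s \<Longrightarrow> r \<subseteq> s"
  shows "Kjoin p q = r"
  unfolding Kjoin_def
  apply (rule the_equality)
  using assms apply blast
  using assms by (meson subset_antisym)

lemma Kjoin_comm: "Kjoin p q = Kjoin q p"
  unfolding Kjoin_def by (simp add: Un_commute)

lemma Kjoin_sub: "p \<subseteq> q \<Longrightarrow> q \<in> Klat \<Longrightarrow> Kjoin p q = q"
  by (rule Kjoin_eq) auto

lemma least_CAB:
  assumes "m' \<le> n'+1" "n' \<le> m'+1" "p \<union> q \<subseteq> CAB m' n'"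
   and "\<And>k l. k \<le> l+1 \<Longrightarrow> l \<le> k+1 \<Longrightarrow> p \<union> q \<subseteq> CAB k l \<Longrightarrow> k \<le> m' \<and> l \<le> n'"
   and "\<And>k. \<not> p \<union> q \<subseteq> Aset k" "\<And>k. \<not> p \<union> q \<subseteq> Bset k" "\<not> p \<union> q \<subseteq> Cset" "\<not> p \<union> q \<subseteq> {}"
  shows "Kjoin p q = CAB m' n'"
proof (rule Kjoin_eq)
  show "CAB m' n' \<in> Klat" using assms Klat_intros by auto
  show "p \<union> q \<subseteq> CAB m' n'" by fact
  fix s assume s: "s \<in> Klat" "p \<union> q \<subseteq> s"
  from Klat_cases[OF s(1)] assms s(2) obtain k l where "s = CAB k l" "k \<le> l+1" "l \<le> k+1" by blast
  with assms(4) s(2) show "CAB m' n' \<subseteq> s" by simp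
qed

lemma J_AB: "Kjoin (Aset m) (Bset n) = CAB (min m (n+1)) (min n (m+1))"
  by (rule least_CAB) auto

lemma J_AC: "Kjoin (Aset m) Cset = CAB m (Suc m)"
  by (rule least_CAB) auto

lemma J_BC: "Kjoin (Bset n) Cset = CAB (Suc n) n"
  by (rule least_CAB) auto

lemma J_ACAB: "m \<le> n+1 \<Longrightarrow> n \<le> m+1 \<Longrightarrow> Kjoin (Aset k) (CAB m n) = CAB (min k m) (min n (min k m + 1))"
  by (rule least_CAB) auto

lemma J_BCAB: "m \<le> n+1 \<Longrightarrow> n \<le> m+1 \<Longrightarrow> Kjoin (Bset k) (CAB m n) = CAB (min m (min k n + 1)) (min k n)"
  by (rule least_CAB) auto

lemma J_CABCAB: "m \<le> n+1 \<Longrightarrow> n \<le> m+1 \<Longrightarrow> m' \<le> n'+1 \<Longrightarrow> n' \<le> m'+1 \<Longrightarrow>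
   Kjoin (CAB m n) (CAB m' n') = CAB (min m m') (min n n')"
  by (rule least_CAB) auto

lemma J_all:
  "Kjoin Cset Cset = Cset"
  "Kjoin Cset (Aset m) = CAB m (Suc m)"
  "Kjoin Cset (Bset n) = CAB (Suc n) n"
  "m \<le> n+1 \<Longrightarrow> n \<le> m+1 \<Longrightarrow> Kjoin Cset (CAB m n) = CAB m n"
  "Kjoin (Aset m) Cset = CAB m (Suc m)"
  "Kjoin (Aset m) (Aset k) = Aset (min m k)"
  "Kjoin (Aset m) (Bset n) = CAB (min m (n+1)) (min n (m+1))"
  "m \<le> n+1 \<Longrightarrow> n \<le> m+1 \<Longrightarrow> Kjoin (Aset k) (CAB m n) = CAB (min k m) (min n (min k m + 1))"
  "Kjoin (Bset n) Cset = CAB (Suc n) n"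
  "Kjoin (Bset n) (Aset m) = CAB (min m (n+1)) (min n (m+1))"
  "Kjoin (Bset n) (Bset k) = Bset (min n k)"
  "m \<le> n+1 \<Longrightarrow> n \<le> m+1 \<Longrightarrow> Kjoin (Bset k) (CAB m n) = CAB (min m (min k n + 1)) (min k n)"
  "m \<le> n+1 \<Longrightarrow> n \<le> m+1 \<Longrightarrow> Kjoin (CAB m n) Cset = CAB m n"
  "m \<le> n+1 \<Longrightarrow> n \<le> m+1 \<Longrightarrow> Kjoin (CAB m n) (Aset k) = CAB (min k m) (min n (min k m + 1))"
  "m \<le> n+1 \<Longrightarrow> n \<le> m+1 \<Longrightarrow> Kjoin (CAB m n) (Bset k) = CAB (min m (min k n + 1)) (min k n)"
  "m \<le> n+1 \<Longrightarrow> n \<le> m+1 \<Longrightarrow> m' \<le> n'+1 \<Longrightarrow> n' \<le> m'+1 \<Longrightarrow>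
   Kjoin (CAB m n) (CAB m' n') = CAB (min m m') (min n n')"
proof -
  show "Kjoin Cset Cset = Cset" by (rule Kjoin_sub) (auto simp: Klat_intros)
  show "Kjoin Cset (Aset m) = CAB m (Suc m)" by (subst Kjoin_comm) (rule J_AC)
  show "Kjoin Cset (Bset n) = CAB (Suc n) n" by (subst Kjoin_comm) (rule J_BC)
  show "m \<le> n+1 \<Longrightarrow> n \<le> m+1 \<Longrightarrow> Kjoin Cset (CAB m n) = CAB m n"
    by (rule Kjoin_sub) (auto simp: Klat_intros)
  show "Kjoin (Aset m) Cset = CAB m (Suc m)" by (rule J_AC)
  show "Kjoin (Aset m) (Aset k) = Aset (min m k)"
  proof (cases "m \<le> k")
    case True
    have "Kjoin (Aset k) (Aset m) = Aset m" by (rule Kjoin_sub) (simp_all add: True Klat_intros)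
    then show ?thesis using True by (subst Kjoin_comm) (simp add: min_def)
  next
    case False
    have "Kjoin (Aset m) (Aset k) = Aset k" by (rule Kjoin_sub) (use False in \<open>simp_all add: Klat_intros\<close>)
    then show ?thesis using False by (simp add: min_def)
  qed
  show "Kjoin (Aset m) (Bset n) = CAB (min m (n+1)) (min n (m+1))" by (rule J_AB)
  show "m \<le> n+1 \<Longrightarrow> n \<le> m+1 \<Longrightarrow> Kjoin (Aset k) (CAB m n) = CAB (min k m) (min n (min k m + 1))"
    by (rule J_ACAB)
  show "Kjoin (Bset n) Cset = CAB (Suc n) n" by (rule J_BC)
  show "Kjoin (Bset n) (Aset m) = CAB (min m (n+1)) (min n (m+1))" by (subst Kjoin_comm) (rule J_AB)
  show "Kjoin (Bset n) (Bset k) = Bset (min n k)"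
  proof (cases "n \<le> k")
    case True
    have "Kjoin (Bset k) (Bset n) = Bset n" by (rule Kjoin_sub) (simp_all add: True Klat_intros)
    then show ?thesis using True by (subst Kjoin_comm) (simp add: min_def)
  next
    case False
    have "Kjoin (Bset n) (Bset k) = Bset k" by (rule Kjoin_sub) (use False in \<open>simp_all add: Klat_intros\<close>)
    then show ?thesis using False by (simp add: min_def)
  qed
  show "m \<le> n+1 \<Longrightarrow> n \<le> m+1 \<Longrightarrow> Kjoin (Bset k) (CAB m n) = CAB (min m (min k n + 1)) (min k n)"
    by (rule J_BCAB)
  show "m \<le> n+1 \<Longrightarrow> n \<le> m+1 \<Longrightarrow> Kjoin (CAB m n) Cset = CAB m n"
    by (subst Kjoin_comm) (rule Kjoin_sub, auto simp: Klat_intros)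
  show "m \<le> n+1 \<Longrightarrow> n \<le> m+1 \<Longrightarrow> Kjoin (CAB m n) (Aset k) = CAB (min k m) (min n (min k m + 1))"
    by (subst Kjoin_comm) (rule J_ACAB)
  show "m \<le> n+1 \<Longrightarrow> n \<le> m+1 \<Longrightarrow> Kjoin (CAB m n) (Bset k) = CAB (min m (min k n + 1)) (min k n)"
    by (subst Kjoin_comm) (rule J_BCAB)
  show "m \<le> n+1 \<Longrightarrow> n \<le> m+1 \<Longrightarrow> m' \<le> n'+1 \<Longrightarrow> n' \<le> m'+1 \<Longrightarrow>
   Kjoin (CAB m n) (CAB m' n') = CAB (min m m') (min n n')" by (rule J_CABCAB)
qed

definition fext :: "(pt set \<Rightarrow> 'a::lattice) \<Rightarrow> pt set \<Rightarrow> 'a" where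
  "fext x p = (if p \<in> JK then x p else inf (x (Aset (LEAST k. PA k \<in> p))) (x (Bset (LEAST k. PB k \<in> p))))"

lemma fext_simps[simp]:
  "fext x Cset = x Cset" "fext x (Aset m) = x (Aset m)" "fext x (Bset m) = x (Bset m)"
  "fext x (CAB m n) = inf (x (Aset m)) (x (Bset n))"
proof -
  have "CAB m n \<notin> JK" unfolding JK_cases by simp
  moreover have "(LEAST k. PA k \<in> CAB m n) = m" by (rule Least_equality) auto
  moreover have "(LEAST k. PB k \<in> CAB m n) = n" by (rule Least_equality) auto
  ultimately show "fext x (CAB m n) = inf (x (Aset m)) (x (Bset n))" unfolding fext_def by simp
qed (simp_all add: fext_def JK_def)

lemma hom_core:
  fixes x :: "pt set \<Rightarrow> 'a::lattice"
  assumes monoA: "\<And>m k. m \<le> k \<Longrightarrow> x (Aset m) \<le> x (Aset k)"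
    and monoB: "\<And>m k. m \<le> k \<Longrightarrow> x (Bset m) \<le> x (Bset k)"
    and H2: "\<And>m n. inf (x (Aset m)) (x (Bset n)) \<le> x Cset"
    and H3: "\<And>n. inf (x (Bset n)) (x Cset) \<le> x (Aset (Suc n))"
    and H4: "\<And>n. inf (x (Aset n)) (x Cset) \<le> x (Bset (Suc n))"
  shows "p \<in> Kminus \<Longrightarrow> q \<in> Kminus \<Longrightarrow> fext x (Kjoin p q) = inf (fext x p) (fext x q)"
proof -
  have KA: "inf (x (Aset k)) (x (Bset n)) = inf (x (Aset (Suc n))) (x (Bset n))" if "n < k" for k n
  proof (rule antisym)
    show "inf (x (Aset k)) (x (Bset n)) \<le> inf (x (Aset (Suc n))) (x (Bset n))"
      by (rule le_infI[OF order_trans[OF le_infI[OF inf_le2 H2[of k n]] H3[of n]] inf_le2])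
    have "Suc n \<le> k" using that by simp
    then show "inf (x (Aset (Suc n))) (x (Bset n)) \<le> inf (x (Aset k)) (x (Bset n))"
      by (rule inf_mono[OF monoA order_refl])
  qed
  have KB: "inf (x (Aset n)) (x (Bset k)) = inf (x (Aset n)) (x (Bset (Suc n)))" if "n < k" for k n
  proof (rule antisym)
    show "inf (x (Aset n)) (x (Bset k)) \<le> inf (x (Aset n)) (x (Bset (Suc n)))"
      by (rule le_infI[OF inf_le1 order_trans[OF le_infI[OF inf_le1 H2[of n k]] H4[of n]]])
    have "Suc n \<le> k" using that by simp
    then show "inf (x (Aset n)) (x (Bset (Suc n))) \<le> inf (x (Aset n)) (x (Bset k))"
      by (rule inf_mono[OF order_refl monoB])
  qed
  have AC: "inf (x (Aset m)) (x Cset) = inf (x (Aset m)) (x (Bset (Suc m)))" for m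
    by (rule antisym[OF le_infI[OF inf_le1 H4[of m]] le_infI[OF inf_le1 H2[of m "Suc m"]]])
  have BC: "inf (x (Bset m)) (x Cset) = inf (x (Aset (Suc m))) (x (Bset m))" for m
    by (rule antisym[OF le_infI[OF H3[of m] inf_le1] le_infI[OF inf_le2 H2[of "Suc m" m]]])
  have CAB': "inf (x Cset) (inf (x (Aset m)) (x (Bset n))) = inf (x (Aset m)) (x (Bset n))" for m n
    by (rule inf_absorb2[OF H2])
  have AA: "inf (x (Aset m)) (x (Aset k)) = x (Aset (min m k))" for m k
    using monoA[of m k] monoA[of k m] by (cases "m \<le> k") (auto simp: min_def inf_absorb1 inf_absorb2)
  have BB: "inf (x (Bset m)) (x (Bset k)) = x (Bset (min m k))" for m k
    using monoB[of m k] monoB[of k m] by (cases "m \<le> k") (auto simp: min_def inf_absorb1 inf_absorb2)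
  let ?G = "\<lambda>p q. fext x (Kjoin p q) = inf (fext x p) (fext x q)"
  have sym: "?G q p" if "?G p q" for p q
    using that unfolding Kjoin_comm[of q p] inf_commute[of "fext x q"] .
  have cCC: "?G Cset Cset" by (simp add: J_all)
  have cCA: "?G Cset (Aset m)" for m by (simp only: J_all fext_simps inf_commute[of "x Cset" "x (Aset m)"] AC)
  have cCB: "?G Cset (Bset m)" for m by (simp only: J_all fext_simps inf_commute[of "x Cset" "x (Bset m)"] BC)
  have cCX: "?G Cset (CAB m n)" if "m \<le> n+1" "n \<le> m+1" for m n using that by (simp add: J_all CAB')
  have cAA: "?G (Aset m) (Aset k)" for m k by (simp add: J_all AA)
  have cBB: "?G (Bset m) (Bset k)" for m k by (simp add: J_all BB)
  have cAB: "?G (Aset m) (Bset n)" for m n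
  proof -
    consider "m \<le> n+1" "n \<le> m+1" | "n+1 < m" | "m+1 < n" by linarith
    then show ?thesis
    proof cases
      case 1 then show ?thesis by (simp add: J_all min_def)
    next
      case 2 then have "min m (n+1) = Suc n" "min n (m+1) = n" by auto
      then show ?thesis using KA[of n m] 2 by (simp add: J_all)
    next
      case 3 then have "min m (n+1) = m" "min n (m+1) = Suc m" by auto
      then show ?thesis using KB[of m n] 3 by (simp add: J_all)
    qed
  qed
  have cAX: "?G (Aset k) (CAB m n)" if "m \<le> n+1" "n \<le> m+1" for k m n
  proof -
    define M where "M = min k m"
    have e: "inf (x (Aset k)) (inf (x (Aset m)) (x (Bset n))) = inf (x (Aset M)) (x (Bset n))"
      by (simp add: inf_assoc[symmetric] AA M_def)
    show ?thesis
    proof (cases "n \<le> M+1")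
      case True then show ?thesis using that e by (simp add: J_all M_def[symmetric])
    next
      case False then have "min n (M+1) = Suc M" by auto
      then show ?thesis using that e KB[of M n] False by (simp add: J_all M_def[symmetric])
    qed
  qed
  have cBX: "?G (Bset k) (CAB m n)" if "m \<le> n+1" "n \<le> m+1" for k m n
  proof -
    define N where "N = min k n"
    have e: "inf (x (Bset k)) (inf (x (Aset m)) (x (Bset n))) = inf (x (Aset m)) (x (Bset N))"
    proof -
      have "inf (x (Bset k)) (inf (x (Aset m)) (x (Bset n))) = inf (x (Aset m)) (inf (x (Bset k)) (x (Bset n)))"
        by (simp add: inf_aci)
      then show ?thesis by (simp add: BB N_def)
    qed
    show ?thesis
    proof (cases "m \<le> N+1")
      case True then show ?thesis using that e by (simp add: J_all N_def[symmetric])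
    next
      case False then have "min m (N+1) = Suc N" by auto
      then show ?thesis using that e KA[of N m] False by (simp add: J_all N_def[symmetric])
    qed
  qed
  have cXX: "?G (CAB m n) (CAB m' n')" if "m \<le> n+1" "n \<le> m+1" "m' \<le> n'+1" "n' \<le> m'+1" for m n m' n'
  proof -
    have "fext x (Kjoin (CAB m n) (CAB m' n')) = inf (x (Aset (min m m'))) (x (Bset (min n n')))"
      using that by (simp add: J_all)
    also have "\<dots> = inf (inf (x (Aset m)) (x (Aset m'))) (inf (x (Bset n)) (x (Bset n')))"
      by (simp only: AA BB)
    also have "\<dots> = inf (fext x (CAB m n)) (fext x (CAB m' n'))"
      by (simp add: inf_aci)
    finally show ?thesis .
  qed
  assume p: "p \<in> Kminus" and q: "q \<in> Kminus"
  show "?G p q"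
    using Kminus_cases[OF p] Kminus_cases[OF q]
    apply (elim disjE exE conjE)
    apply (simp_all only:)
    apply (simp_all only: cCC cCA cCB cCX cAA cBB cAB cAX cBX cXX sym[OF cCA] sym[OF cCB] sym[OF cCX] sym[OF cAB] sym[OF cAX] sym[OF cBX])
    done
qed

lemma Kminus_intros: "Cset \<in> Kminus" "Aset m \<in> Kminus" "Bset m \<in> Kminus"
  "m \<le> n+1 \<Longrightarrow> n \<le> m+1 \<Longrightarrow> CAB m n \<in> Kminus"
  unfolding Kminus_def using Klat_intros by auto

lemma JK_Kminus: "p \<in> JK \<Longrightarrow> p \<in> Kminus"
  unfolding JK_cases using Kminus_intros by auto

lemma JK_Klat: "p \<in> JK \<Longrightarrow> p \<in> Klat"
  using JK_Kminus unfolding Kminus_def by auto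

lemma eventual_mono:
  fixes g :: "nat \<Rightarrow> 'a::order"
  assumes mono: "\<And>m n. m \<le> n \<Longrightarrow> g m \<le> g n" and fin: "finite (range g)"
  shows "\<exists>N. \<forall>n\<ge>N. g n = eventual g"
proof -
  obtain v where v: "v \<in> range g" "\<forall>b\<in>range g. v \<le> b \<longrightarrow> v = b"
    using finite_has_maximal[OF fin] by blast
  then obtain N where vN: "v = g N" by blast
  have st: "\<forall>n\<ge>N. g n = v"
  proof (intro allI impI)
    fix n assume "N \<le> n"
    then have "v \<le> g n" using mono vN by simp
    then show "g n = v" using v(2) by auto
  qed
  have ev: "eventual g = v" unfolding eventual_def
  proof (rule the_equality)
    show "\<exists>N. \<forall>n\<ge>N. g n = v" using st by blast
    fix w assume "\<exists>N. \<forall>n\<ge>N. g n = w"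
    then obtain N' where N': "\<forall>n\<ge>N'. g n = w" by blast
    have "g (max N N') = w" using N' by simp
    moreover have "g (max N N') = v" using st by simp
    ultimately show "w = v" by simp
  qed
  show ?thesis using st ev by blast
qed

lemma le_eventual:
  fixes g :: "nat \<Rightarrow> 'a::order"
  assumes mono: "\<And>m n. m \<le> n \<Longrightarrow> g m \<le> g n" and N: "\<forall>n\<ge>N. g n = eventual g"
  shows "g n \<le> eventual g"
proof -
  have "g n \<le> g (max n N)" using mono by simp
  also have "\<dots> = eventual g" using N by simp
  finally show ?thesis .
qed

theorem lemma5p7:
  fixes h :: nat and x :: "pt set \<Rightarrow> 'a::bounded_lattice_bot"
  assumes "0 < h"
    and "h_modular h TYPE('a)"
    and fin: "finite (x ` JK)"
  shows "(inAstar x \<longleftrightarrow> (\<exists>f. hom_ext x f))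
    \<and> (\<forall>f g. hom_ext x f \<and> hom_ext x g \<longrightarrow> (\<forall>p\<in>Kminus. f p = g p))"
proof -
  have JKs: "Cset \<in> JK" "Aset m \<in> JK" "Bset m \<in> JK" for m unfolding JK_def by auto
  have finA: "finite (range (\<lambda>n. x (Aset n)))"
    by (rule finite_subset[OF _ fin]) (auto simp: JKs)
  have finB: "finite (range (\<lambda>n. x (Bset n)))"
    by (rule finite_subset[OF _ fin]) (auto simp: JKs)
  have evs: "\<exists>N. (\<forall>n\<ge>N. x (Aset n) = xainf x) \<and> (\<forall>n\<ge>N. x (Bset n) = xbinf x)
     \<and> (\<forall>n. x (Aset n) \<le> xainf x) \<and> (\<forall>n. x (Bset n) \<le> xbinf x)"
    if monoA: "\<And>m k. m \<le> k \<Longrightarrow> x (Aset m) \<le> x (Aset k)"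
    and monoB: "\<And>m k. m \<le> k \<Longrightarrow> x (Bset m) \<le> x (Bset k)"
  proof -
    obtain Na where Na: "\<forall>n\<ge>Na. x (Aset n) = xainf x"
      using eventual_mono[of "\<lambda>n. x (Aset n)", OF monoA finA] unfolding xainf_def by blast
    obtain Nb where Nb: "\<forall>n\<ge>Nb. x (Bset n) = xbinf x"
      using eventual_mono[of "\<lambda>n. x (Bset n)", OF monoB finB] unfolding xbinf_def by blast
    have "\<forall>n. x (Aset n) \<le> xainf x"
      using le_eventual[of "\<lambda>n. x (Aset n)", OF monoA] Na unfolding xainf_def by blast
    moreover have "\<forall>n. x (Bset n) \<le> xbinf x"
      using le_eventual[of "\<lambda>n. x (Bset n)", OF monoB] Nb unfolding xbinf_def by blast
    moreover have "\<forall>n\<ge>max Na Nb. x (Aset n) = xainf x" using Na by simp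
    moreover have "\<forall>n\<ge>max Na Nb. x (Bset n) = xbinf x" using Nb by simp
    ultimately show ?thesis by blast
  qed
  have uniq: "f p = g p" if f: "hom_ext x f" and g: "hom_ext x g" and p: "p \<in> Kminus" for f g p
  proof -
    have val: "F p = fext x p"
      if F: "hom_ext x F" for F
    proof -
      have agr: "\<And>q. q \<in> JK \<Longrightarrow> F q = x q" and hom: "\<And>p q. p \<in> Kminus \<Longrightarrow> q \<in> Kminus \<Longrightarrow> F (Kjoin p q) = inf (F p) (F q)"
        using F unfolding hom_ext_def by auto
      show ?thesis
        using Kminus_cases[OF p]
      proof (elim disjE exE conjE)
        fix m n assume pe: "p = CAB m n" "m \<le> n+1" "n \<le> m+1"
        have "Kjoin (Aset m) (Bset n) = CAB m n" using pe by (simp add: J_AB min_def)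
        then have "F (CAB m n) = inf (x (Aset m)) (x (Bset n))"
          using hom[OF Kminus_intros(2) Kminus_intros(3), of m n] agr JKs by simp
        then show ?thesis using pe by simp
      qed (auto simp: agr JKs)
    qed
    show ?thesis using val[OF f] val[OF g] by simp
  qed
  have fwd: "inAstar x" if F: "hom_ext x f" for f
  proof -
    have agr: "\<And>q. q \<in> JK \<Longrightarrow> f q = x q" and hom: "\<And>p q. p \<in> Kminus \<Longrightarrow> q \<in> Kminus \<Longrightarrow> f (Kjoin p q) = inf (f p) (f q)"
      using F unfolding hom_ext_def by auto
    have anti: "x q \<le> x p" if "p \<in> JK" "q \<in> JK" "p \<subseteq> q" for p q
    proof -
      have "x q = f (Kjoin p q)" using Kjoin_sub[OF that(3) JK_Klat[OF that(2)]] agr that(2) by simp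
      also have "\<dots> = inf (x p) (x q)" using hom[OF JK_Kminus JK_Kminus] that agr by simp
      finally show ?thesis by (metis inf.cobounded1)
    qed
    have monoA: "\<And>m k. m \<le> k \<Longrightarrow> x (Aset m) \<le> x (Aset k)" using anti JKs by simp
    have monoB: "\<And>m k. m \<le> k \<Longrightarrow> x (Bset m) \<le> x (Bset k)" using anti JKs by simp
    obtain N where N: "\<forall>n\<ge>N. x (Aset n) = xainf x" "\<forall>n\<ge>N. x (Bset n) = xbinf x"
      using evs[OF monoA monoB] by blast
    have fC: "f (CAB k l) = inf (x (Aset k)) (x (Bset l))" if "k \<le> l+1" "l \<le> k+1" for k l
    proof -
      have "Kjoin (Aset k) (Bset l) = CAB k l" using that by (simp add: J_AB min_def)
      then show ?thesis using hom[OF Kminus_intros(2) Kminus_intros(3), of k l] agr JKs by simp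
    qed
    have "inf (x (Aset N)) (x (Bset N)) = f (Kjoin Cset (CAB N N))"
      using fC[of N N] J_all(4)[of N N] by simp
    also have "\<dots> = inf (x Cset) (inf (x (Aset N)) (x (Bset N)))"
      using hom[OF Kminus_intros(1) Kminus_intros(4)[of N N]] fC[of N N] agr JKs by simp
    finally have "inf (x (Aset N)) (x (Bset N)) \<le> x Cset" by (metis inf.cobounded1)
    then have c: "x1_c x = x Cset" using N unfolding x1_c_def by (simp add: sup.absorb1)
    have a: "x1_a x n = x (Aset n)" for n
    proof (cases n)
      case (Suc m)
      have "inf (x (Bset m)) (x Cset) = f (Kjoin (Bset m) Cset)"
        using hom[OF Kminus_intros(3) Kminus_intros(1)] agr JKs by simp
      also have "\<dots> = inf (x (Aset (Suc m))) (x (Bset m))" using J_BC fC by simp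
      finally have "inf (x (Bset m)) (x Cset) \<le> x (Aset (Suc m))" by (metis inf.cobounded1)
      then show ?thesis using Suc unfolding x1_a_def by (simp add: sup.absorb1)
    qed (simp add: x1_a_def)
    have b: "x1_b x n = x (Bset n)" for n
    proof (cases n)
      case (Suc m)
      have "inf (x (Aset m)) (x Cset) = f (Kjoin (Aset m) Cset)"
        using hom[OF Kminus_intros(2) Kminus_intros(1)] agr JKs by simp
      also have "\<dots> = inf (x (Aset m)) (x (Bset (Suc m)))" using J_AC fC by simp
      finally have "inf (x (Aset m)) (x Cset) \<le> x (Bset (Suc m))" by (metis inf.cobounded2)
      then show ?thesis using Suc unfolding x1_b_def by (simp add: sup.absorb1)
    qed (simp add: x1_b_def)
    show ?thesis unfolding inAstar_def inA_def using anti fin c a b by blast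
  qed
  have bwd: "\<exists>f. hom_ext x f" if S: "inAstar x"
  proof -
    have anti: "\<And>p q. p \<in> JK \<Longrightarrow> q \<in> JK \<Longrightarrow> p \<subseteq> q \<Longrightarrow> x q \<le> x p"
      using S unfolding inAstar_def inA_def by blast
    have monoA: "\<And>m k. m \<le> k \<Longrightarrow> x (Aset m) \<le> x (Aset k)" using anti JKs by simp
    have monoB: "\<And>m k. m \<le> k \<Longrightarrow> x (Bset m) \<le> x (Bset k)" using anti JKs by simp
    obtain N where N: "\<forall>n. x (Aset n) \<le> xainf x" "\<forall>n. x (Bset n) \<le> xbinf x"
      using evs[OF monoA monoB] by blast
    have H2: "inf (x (Aset m)) (x (Bset n)) \<le> x Cset" for m n
    proof -
      have "inf (x (Aset m)) (x (Bset n)) \<le> inf (xainf x) (xbinf x)" using N inf_mono by blast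
      also have "\<dots> \<le> x1_c x" unfolding x1_c_def by simp
      also have "\<dots> = x Cset" using S unfolding inAstar_def by blast
      finally show ?thesis .
    qed
    have H3: "inf (x (Bset n)) (x Cset) \<le> x (Aset (Suc n))" for n
    proof -
      have "inf (x (Bset n)) (x Cset) \<le> x1_a x (Suc n)" unfolding x1_a_def by simp
      also have "\<dots> = x (Aset (Suc n))" using S unfolding inAstar_def by blast
      finally show ?thesis .
    qed
    have H4: "inf (x (Aset n)) (x Cset) \<le> x (Bset (Suc n))" for n
    proof -
      have "inf (x (Aset n)) (x Cset) \<le> x1_b x (Suc n)" unfolding x1_b_def by simp
      also have "\<dots> = x (Bset (Suc n))" using S unfolding inAstar_def by blast
      finally show ?thesis .
    qed
    have "hom_ext x (fext x)"
      unfolding hom_ext_def using hom_core[OF monoA monoB H2 H3 H4] by (auto simp: fext_def)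
    then show ?thesis by blast
  qed
  show ?thesis using fwd bwd uniq by blast
qed

end
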